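(* Let $G$ be an infinite complete metrizable abelian torsion topological group. The following are equivalent: (i) $G$ is not NSS; (ii) $G$ contains a subgroup topologically isomorphic to an infinite product (with the Tychonoff product topology) of finite non-trivial (discrete) groups. In particular, if $G$ is not NSS, then $G$ contains an infinite compact zero-dimensional subgroup.
   Context: A topological group is NSS if it has a neighbourhood of the identity containing no non-trivial subgroup. A torsion group is one in which every element has finite order. *)

theory Defs
  imports "HOL-Analysis.Analysis" "HOL-Algebra.Algebra"
begin

definition topological_group :: "('a, 'b) monoid_scheme \<Rightarrow> 'a topology \<Rightarrow> bool" where
  "topological_group G T \<longleftrightarrow>
     group G \<and> topspace T = carrier G \<and>
     continuous_map (prod_topology T T) T (\<lambda>(x, y). x \<otimes>\<^bsub>G\<^esub> y) \<and>
     continuous_map T T (\<lambda>x. inv\<^bsub>G\<^esub> x)"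

definition NSS :: "('a, 'b) monoid_scheme \<Rightarrow> 'a topology \<Rightarrow> bool" where
  "NSS G T \<longleftrightarrow> (\<exists>U V. openin T V \<and> \<one>\<^bsub>G\<^esub> \<in> V \<and> V \<subseteq> U \<and> U \<subseteq> topspace T \<and>
       (\<forall>H. subgroup H G \<and> H \<subseteq> U \<longrightarrow> H = {\<one>\<^bsub>G\<^esub>}))"

definition torsion_group :: "('a, 'b) monoid_scheme \<Rightarrow> bool" where
  "torsion_group G \<longleftrightarrow> (\<forall>x \<in> carrier G. \<exists>n::nat. n > 0 \<and> x [^]\<^bsub>G\<^esub> n = \<one>\<^bsub>G\<^esub>)"

definition top_iso_to_product ::
  "('a, 'b) monoid_scheme \<Rightarrow> 'a topology \<Rightarrow> 'a set \<Rightarrow> 'i set \<Rightarrow> ('i \<Rightarrow> ('c, 'd) monoid_scheme) \<Rightarrow> bool" where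
  "top_iso_to_product G T S I H \<longleftrightarrow> subgroup S G \<and>
     (\<exists>f. f \<in> hom (product_group I H) G \<and>
          bij_betw f (carrier (product_group I H)) S \<and>
          homeomorphic_map (product_topology (\<lambda>i. discrete_topology (carrier (H i))) I)
                           (subtopology T S) f)"

end

theory Submission
  imports Defs
begin

lemma iso_imp_not_NSS:
  fixes G :: "('a, 'b) monoid_scheme" and T :: "'a topology" and H :: "nat \<Rightarrow> ('c,'d) monoid_scheme"
  assumes G: "group G"
    and H: "\<And>n. group (H n) \<and> finite (carrier (H n)) \<and> card (carrier (H n)) > 1"
    and iso: "top_iso_to_product G T S UNIV H"
  shows "\<not> NSS G T"
proof
  assume "NSS G T"
  then obtain U V where V: "openin T V" "\<one>\<^bsub>G\<^esub> \<in> V" "V \<subseteq> U"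
    and U: "\<forall>K. subgroup K G \<and> K \<subseteq> U \<longrightarrow> K = {\<one>\<^bsub>G\<^esub>}"
    unfolding NSS_def by blast
  let ?P = "product_group UNIV H"
  let ?X = "product_topology (\<lambda>i. discrete_topology (carrier (H i))) UNIV"
  from iso obtain f where S: "subgroup S G" and fh: "f \<in> hom ?P G"
    and fb: "bij_betw f (carrier ?P) S" and fm: "homeomorphic_map ?X (subtopology T S) f"
    unfolding top_iso_to_product_def by blast
  have gP: "group ?P" using H by simp
  interpret gh: group_hom ?P G f using gP G fh by (simp add: group_hom_def group_hom_axioms_def)
  have topX: "topspace ?X = carrier ?P" by simp
  have cf: "continuous_map ?X (subtopology T S) f"
    using fm homeomorphic_imp_continuous_map by blast
  have "openin (subtopology T S) (S \<inter> V)"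
    using V(1) by (simp add: openin_subtopology_Int2)
  then have O: "openin ?X {x \<in> topspace ?X. f x \<in> S \<inter> V}"
    using cf openin_continuous_map_preimage by blast
  have oneP: "\<one>\<^bsub>?P\<^esub> \<in> carrier ?P" using group.is_monoid[OF gP] monoid.one_closed by blast
  have one: "\<one>\<^bsub>?P\<^esub> \<in> {x \<in> topspace ?X. f x \<in> S \<inter> V}"
    using V(2) gh.hom_one S subgroup.one_closed oneP unfolding topX by auto
  obtain W where Wf: "finite {i \<in> UNIV. W i \<noteq> topspace (discrete_topology (carrier (H i)))}"
    and "\<forall>i\<in>UNIV. openin (discrete_topology (carrier (H i))) (W i)"
    and W1: "\<one>\<^bsub>?P\<^esub> \<in> Pi\<^sub>E UNIV W" and WO: "Pi\<^sub>E UNIV W \<subseteq> {x \<in> topspace ?X. f x \<in> S \<inter> V}"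
    using bspec[OF O[unfolded openin_product_topology_alt] one] by (elim exE conjE) (rule that; assumption)
  have "finite {i. W i \<noteq> carrier (H i)}" using Wf by simp
  then obtain N where N0: "{i. W i \<noteq> carrier (H i)} \<subseteq> {..<N}"
    using finite_nat_bounded by blast
  have N: "\<And>i. \<not> i < N \<Longrightarrow> W i = carrier (H i)" using N0 by blast
  define K where "K = Pi\<^sub>E UNIV (\<lambda>i. if i < N then {\<one>\<^bsub>H i\<^esub>} else carrier (H i))"
  have sg: "subgroup (if i < N then {\<one>\<^bsub>H i\<^esub>} else carrier (H i)) (H i)" for i
    using H[of i] by (cases "i < N") (simp_all add: group.triv_subgroup group.subgroup_self)
  have Ksub: "subgroup K ?P"
    unfolding K_def using H sg by (subst PiE_subgroup_product_group) auto
  have KW: "K \<subseteq> Pi\<^sub>E UNIV W"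
  proof
    fix a assume a: "a \<in> K"
    show "a \<in> Pi\<^sub>E UNIV W"
    proof (rule PiE_I)
      fix i
      show "a i \<in> W i"
      proof (cases "i < N")
        case True
        have "a i \<in> (if i < N then {\<one>\<^bsub>H i\<^esub>} else carrier (H i))"
          using a unfolding K_def by (rule PiE_mem) simp
        then have "a i = \<one>\<^bsub>H i\<^esub>" using True by simp
        then show ?thesis using W1 by (auto simp: PiE_iff)
      next
        case False
        then have "W i = carrier (H i)" using N by blast
        moreover have "a i \<in> (if i < N then {\<one>\<^bsub>H i\<^esub>} else carrier (H i))"
          using a unfolding K_def by (rule PiE_mem) simp
        ultimately show ?thesis using False by simp
      qed
    qed auto
  qed
  have "subgroup (f ` K) G" using gh.subgroup_img_is_subgroup Ksub by blast
  moreover have "f ` K \<subseteq> U" using KW WO V(3) by blast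
  ultimately have fK: "f ` K = {\<one>\<^bsub>G\<^esub>}" using U by blast
  have "\<exists>c\<in>carrier (H N). c \<noteq> \<one>\<^bsub>H N\<^esub>"
  proof (rule ccontr)
    assume "\<not> ?thesis"
    then have "carrier (H N) \<subseteq> {\<one>\<^bsub>H N\<^esub>}" by blast
    then have "card (carrier (H N)) \<le> 1" using card_mono[of "{\<one>\<^bsub>H N\<^esub>}"] by simp
    with H[of N] show False by linarith
  qed
  then obtain c where c: "c \<in> carrier (H N)" "c \<noteq> \<one>\<^bsub>H N\<^esub>" by blast
  define e where "e = (\<one>\<^bsub>?P\<^esub>)(N := c)"
  have H1: "\<And>i. \<one>\<^bsub>H i\<^esub> \<in> carrier (H i)" using H group.is_monoid monoid.one_closed by blast
  have eK: "e \<in> K" using c H1 by (auto simp: e_def K_def PiE_iff)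
  have eP: "e \<in> carrier ?P" using eK Ksub subgroup.subset by blast
  have "e \<noteq> \<one>\<^bsub>?P\<^esub>" using c by (auto simp: e_def fun_eq_iff)
  then have "f e \<noteq> f \<one>\<^bsub>?P\<^esub>"
    using fb eP gP group.is_monoid monoid.one_closed bij_betw_imp_inj_on inj_on_contraD by metis
  moreover have "f e \<in> f ` K" using eK by (rule imageI)
  then have "f e = \<one>\<^bsub>G\<^esub>" using fK by (simp only: singleton_iff)
  ultimately show False using gh.hom_one by simp
qed

lemma product_discrete_dim_le_0:
  "product_topology (\<lambda>i. discrete_topology (A i)) I dim_le 0"
  unfolding dimension_le_0_neighbourhood_base_of_clopen neighbourhood_base_of
proof (intro allI impI, elim conjE)
  let ?X = "product_topology (\<lambda>i. discrete_topology (A i)) I"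
  fix W x assume W: "openin ?X W" and x: "x \<in> W"
  obtain U where Uf: "finite {i \<in> I. U i \<noteq> topspace (discrete_topology (A i))}"
    and "\<forall>i\<in>I. openin (discrete_topology (A i)) (U i)"
    and xU: "x \<in> Pi\<^sub>E I U" and UW: "Pi\<^sub>E I U \<subseteq> W"
    using bspec[OF W[unfolded openin_product_topology_alt] x] by (elim exE conjE) (rule that; assumption)
  define F where "F = {i \<in> I. U i \<noteq> A i}"
  have F: "finite F" using Uf by (simp add: F_def)
  have xt: "x \<in> topspace ?X" using W x openin_subset by blast
  then have xA: "\<And>i. i \<in> I \<Longrightarrow> x i \<in> A i" by (simp add: PiE_iff)
  define C where "C = Pi\<^sub>E I (\<lambda>i. if i \<in> F then {x i} else A i)"
  have xC: "x \<in> C" using xt xA by (auto simp: C_def PiE_iff)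
  have "{i \<in> I. (if i \<in> F then {x i} else A i) \<noteq> topspace (discrete_topology (A i))} \<subseteq> F"
    by auto
  then have "finite {i \<in> I. (if i \<in> F then {x i} else A i) \<noteq> topspace (discrete_topology (A i))}"
    using F finite_subset by blast
  moreover have "\<forall>i\<in>I. openin (discrete_topology (A i)) (if i \<in> F then {x i} else A i)"
    using xA by auto
  ultimately have oC: "openin ?X C" unfolding C_def by (simp add: openin_PiE_gen)
  have "\<forall>i\<in>I. closedin (discrete_topology (A i)) (if i \<in> F then {x i} else A i)"
    using xA by auto
  then have cC: "closedin ?X C" unfolding C_def by (simp add: closedin_product_topology)
  have CW: "C \<subseteq> W"
  proof
    fix y assume y: "y \<in> C"
    have "y \<in> Pi\<^sub>E I U"
    proof (rule PiE_I)
      fix i assume i: "i \<in> I"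
      have yi: "y i \<in> (if i \<in> F then {x i} else A i)" using y i unfolding C_def by (rule PiE_mem)
      show "y i \<in> U i"
      proof (cases "i \<in> F")
        case True
        then show ?thesis using yi xU i by (auto simp: PiE_iff)
      next
        case False
        then have "U i = A i" using i by (simp add: F_def)
        then show ?thesis using yi False by simp
      qed
    next
      fix i assume i: "i \<notin> I" show "y i = undefined" by (rule PiE_arb[OF y[unfolded C_def] i])
    qed
    then show "y \<in> W" by (rule subsetD[OF UW])
  qed
  show "\<exists>U V. openin ?X U \<and> (closedin ?X V \<and> openin ?X V) \<and> x \<in> U \<and> U \<subseteq> V \<and> V \<subseteq> W"
    apply (rule exI[of _ C], rule exI[of _ C]) using oC cC xC CW by simp
qed

lemma iso_imp_K:
  fixes G :: "('a, 'b) monoid_scheme" and T :: "'a topology" and H :: "nat \<Rightarrow> ('c,'d) monoid_scheme"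
  assumes tg: "topological_group G T"
    and H: "\<And>n. group (H n) \<and> finite (carrier (H n)) \<and> card (carrier (H n)) > 1"
    and iso: "top_iso_to_product G T S UNIV H"
  shows "\<exists>K. subgroup K G \<and> infinite K \<and> compactin T K \<and> subtopology T K dim_le 0"
proof (intro exI conjI)
  let ?P = "product_group UNIV H"
  let ?X = "product_topology (\<lambda>i. discrete_topology (carrier (H i))) UNIV"
  from iso obtain f where S: "subgroup S G" and fh: "f \<in> hom ?P G"
    and fb: "bij_betw f (carrier ?P) S" and fm: "homeomorphic_map ?X (subtopology T S) f"
    unfolding top_iso_to_product_def by blast
  show "subgroup S G" by (rule S)
  have topX: "topspace ?X = carrier ?P" by simp
  have cf: "continuous_map ?X T f"
    using fm homeomorphic_imp_continuous_map continuous_map_in_subtopology by blast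
  have "compact_space ?X"
    using H by (simp add: compact_space_product_topology compact_space_discrete_topology)
  then have "compactin T (f ` topspace ?X)"
    unfolding compact_space_def using cf by (rule image_compactin)
  moreover have "f ` topspace ?X = S" using fb topX by (simp add: bij_betw_def)
  ultimately show "compactin T S" by simp
  have "?X homeomorphic_space subtopology T S"
    using fm by (rule homeomorphic_map_imp_homeomorphic_space)
  then show "subtopology T S dim_le 0"
    using homeomorphic_space_dimension_le[of ?X "subtopology T S" 0]
      product_discrete_dim_le_0[of "\<lambda>i. carrier (H i)" UNIV] by simp
  have H1: "\<And>i. \<one>\<^bsub>H i\<^esub> \<in> carrier (H i)" using H group.is_monoid monoid.one_closed by blast
  have "\<forall>n. \<exists>c. c \<in> carrier (H n) \<and> c \<noteq> \<one>\<^bsub>H n\<^esub>"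
  proof (rule allI, rule ccontr)
    fix n
    assume "\<not> (\<exists>c. c \<in> carrier (H n) \<and> c \<noteq> \<one>\<^bsub>H n\<^esub>)"
    then have "carrier (H n) \<subseteq> {\<one>\<^bsub>H n\<^esub>}" by blast
    then have "card (carrier (H n)) \<le> 1" using card_mono[of "{\<one>\<^bsub>H n\<^esub>}"] by simp
    with H[of n] show False by linarith
  qed
  from choice[OF this] obtain c where c0: "\<forall>n. c n \<in> carrier (H n) \<and> c n \<noteq> \<one>\<^bsub>H n\<^esub>"
    by (elim exE) (rule that)
  have c: "\<And>n. c n \<in> carrier (H n)" "\<And>n. c n \<noteq> \<one>\<^bsub>H n\<^esub>" using c0 by auto
  define g where "g n = (\<lambda>i. if i = n then c n else \<one>\<^bsub>H i\<^esub>)" for n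
  have "inj g"
  proof (rule injI)
    fix m n assume "g m = g n"
    then have "g m m = g n m" by simp
    then show "m = n" using c(2)[of m] by (auto simp: g_def split: if_splits)
  qed
  then have "infinite (range g)" by (rule range_inj_infinite)
  moreover have "range g \<subseteq> carrier ?P" using c H1 by (auto simp: g_def PiE_iff)
  ultimately have "infinite (carrier ?P)" using finite_subset by blast
  then show "infinite S" using fb bij_betw_finite by blast
qed

lemma (in group) pow_mod_ord:
  assumes x: "x \<in> carrier G"
  shows "x [^] (n mod ord x) = x [^] n"
proof -
  have "x [^] n = x [^] (n mod ord x + ord x * (n div ord x))" by simp
  also have "\<dots> = x [^] (n mod ord x) \<otimes> (x [^] ord x) [^] (n div ord x)"
    by (simp only: nat_pow_pow[OF x] nat_pow_mult[OF x])
  also have "\<dots> = x [^] (n mod ord x)" using x by simp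
  finally show ?thesis by (rule sym)
qed

lemma (in group) pow_inj_ord:
  assumes x: "x \<in> carrier G" and uv: "u < ord x" "v < ord x" and eq: "x [^] u = x [^] v"
  shows "u = v"
proof (rule ccontr)
  assume ne: "u \<noteq> v"
  have *: False if lt: "a < b" "b < ord x" and e: "x [^] a = x [^] b" for a b
  proof -
    have h1: "x [^] a \<otimes> x [^] (b - a) = x [^] b" using x lt(1) by (simp add: nat_pow_mult)
    have "x [^] a \<otimes> x [^] (b - a) = x [^] a \<otimes> \<one>" using h1 e x by simp
    then have "x [^] (b - a) = \<one>" using x by (simp add: l_cancel)
    then have "ord x dvd (b - a)" using x pow_eq_id by blast
    moreover have "0 < b - a" "b - a < ord x" using lt by auto
    ultimately show False using nat_dvd_not_less by blast
  qed
  show False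
  proof (cases "u < v")
    case True then show ?thesis using * uv eq by blast
  next
    case False then have "v < u" using ne by simp
    then show ?thesis using * uv eq by metis
  qed
qed

lemma (in comm_group) swap4:
  "A \<in> carrier G \<Longrightarrow> B \<in> carrier G \<Longrightarrow> C \<in> carrier G \<Longrightarrow> D \<in> carrier G \<Longrightarrow>
   (A \<otimes> B) \<otimes> (C \<otimes> D) = (A \<otimes> C) \<otimes> (B \<otimes> D)"
  by (simp add: m_ac)

definition Zm :: "nat \<Rightarrow> nat monoid" where
  "Zm k = \<lparr>carrier = {..<k}, mult = (\<lambda>a b. (a + b) mod k), one = 0\<rparr>"

lemma Zm_simps [simp]: "carrier (Zm k) = {..<k}" "(\<otimes>\<^bsub>Zm k\<^esub>) = (\<lambda>a b. (a + b) mod k)" "\<one>\<^bsub>Zm k\<^esub> = 0"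
  by (simp_all add: Zm_def)

lemma Zm_group: assumes k: "0 < k" shows "group (Zm k)"
proof (rule groupI)
  fix x y z assume "x \<in> carrier (Zm k)" "y \<in> carrier (Zm k)" "z \<in> carrier (Zm k)"
  show "x \<otimes>\<^bsub>Zm k\<^esub> y \<otimes>\<^bsub>Zm k\<^esub> z = x \<otimes>\<^bsub>Zm k\<^esub> (y \<otimes>\<^bsub>Zm k\<^esub> z)"
    by (simp add: mod_add_left_eq mod_add_right_eq add.assoc)
next
  fix x assume x: "x \<in> carrier (Zm k)"
  show "\<exists>y\<in>carrier (Zm k). y \<otimes>\<^bsub>Zm k\<^esub> x = \<one>\<^bsub>Zm k\<^esub>"
  proof (rule bexI[of _ "(k - x) mod k"])
    have "((k - x) mod k + x) mod k = (k - x + x) mod k" by (simp add: mod_add_left_eq)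
    also have "\<dots> = 0" using x by simp
    finally show "(k - x) mod k \<otimes>\<^bsub>Zm k\<^esub> x = \<one>\<^bsub>Zm k\<^esub>" by simp
    show "(k - x) mod k \<in> carrier (Zm k)" using k by simp
  qed
qed (use k in auto)

locale ctg = Metric_space M d + comm_group G
  for M :: "'a set" and d and G :: "('a,'b) monoid_scheme" (structure) +
  assumes MG: "M = carrier G"
    and mcompl: "mcomplete"
    and cmult: "continuous_map (prod_topology mtopology mtopology) mtopology (\<lambda>(x,y). x \<otimes> y)"
    and tors: "torsion_group G"
    and nNSS: "\<not> NSS G mtopology"
begin

lemma one_M [simp]: "\<one> \<in> M" using MG by simp

lemma sq_nbhd:
  assumes Ob: "openin mtopology Q" and O1: "\<one> \<in> Q"
  shows "\<exists>V. openin mtopology V \<and> \<one> \<in> V \<and> (\<forall>a\<in>V. \<forall>b\<in>V. a \<otimes> b \<in> Q)"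
proof -
  let ?P = "{z \<in> topspace (prod_topology mtopology mtopology). (\<lambda>(x,y). x \<otimes> y) z \<in> Q}"
  have oP: "openin (prod_topology mtopology mtopology) ?P"
    using cmult Ob by (rule openin_continuous_map_preimage)
  have one1: "(\<one>,\<one>) \<in> ?P" using O1 by simp
  have "\<exists>U V. openin mtopology U \<and> openin mtopology V \<and> \<one> \<in> U \<and> \<one> \<in> V \<and> U \<times> V \<subseteq> ?P"
    by (rule mp[OF spec[OF spec[OF oP[unfolded openin_prod_topology_alt]]] one1])
  then obtain U V where UV: "openin mtopology U" "openin mtopology V" "\<one> \<in> U" "\<one> \<in> V" "U \<times> V \<subseteq> ?P"
    by (elim exE conjE) (rule that; assumption)
  show ?thesis
  proof (intro exI conjI ballI)
    show "openin mtopology (U \<inter> V)" using UV by (simp add: openin_Int)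
    show "\<one> \<in> U \<inter> V" using UV by simp
    fix a b assume "a \<in> U \<inter> V" "b \<in> U \<inter> V"
    then have "(a,b) \<in> ?P" using UV(5) by blast
    then show "a \<otimes> b \<in> Q" by simp
  qed
qed

lemma nss_elem:
  assumes V: "openin mtopology V" and V1: "\<one> \<in> V"
  shows "\<exists>x. x \<in> carrier G \<and> x \<noteq> \<one> \<and> (\<forall>j::nat. x [^] j \<in> V)"
proof -
  have "\<not> (\<forall>H. subgroup H G \<and> H \<subseteq> V \<longrightarrow> H = {\<one>})"
  proof
    assume "\<forall>H. subgroup H G \<and> H \<subseteq> V \<longrightarrow> H = {\<one>}"
    then have "NSS G mtopology" unfolding NSS_def using V V1 openin_subset by blast
    then show False using nNSS by contradiction
  qed
  then obtain H where H: "subgroup H G" "H \<subseteq> V" "H \<noteq> {\<one>}" by blast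
  have "\<one> \<in> H" using H(1) by (rule subgroup.one_closed)
  then obtain x where x: "x \<in> H" "x \<noteq> \<one>" using H(3) by blast
  have "x [^] j \<in> H" for j :: nat
  proof (induction j)
    case 0 then show ?case using \<open>\<one> \<in> H\<close> by simp
  next
    case (Suc j) then show ?case using x H(1) by (simp add: subgroup.m_closed)
  qed
  moreover have "x \<in> carrier G" using x H(1) subgroup.subset by blast
  ultimately show ?thesis using x H(2) by blast
qed

definition delta :: "'a set \<Rightarrow> real" where
  "delta F = Min (insert 1 ((\<lambda>(a,b). d a b) ` {(a,b). a \<in> F \<and> b \<in> F \<and> a \<noteq> b}))"

lemma delta_fin: "finite F \<Longrightarrow> finite (insert 1 ((\<lambda>(a,b). d a b) ` {(a,b). a \<in> F \<and> b \<in> F \<and> a \<noteq> b}))"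
proof -
  assume F: "finite F"
  have "{(a,b). a \<in> F \<and> b \<in> F \<and> a \<noteq> b} \<subseteq> F \<times> F" by auto
  then have "finite {(a,b). a \<in> F \<and> b \<in> F \<and> a \<noteq> b}" using F finite_subset by blast
  then show ?thesis by simp
qed

lemma delta_pos:
  assumes "finite F" "F \<subseteq> M" shows "0 < delta F"
  unfolding delta_def
proof (subst Min_gr_iff)
  show "finite (insert 1 ((\<lambda>(a,b). d a b) ` {(a,b). a \<in> F \<and> b \<in> F \<and> a \<noteq> b}))"
    using assms(1) by (rule delta_fin)
  show "\<forall>a\<in>insert 1 ((\<lambda>(a,b). d a b) ` {(a,b). a \<in> F \<and> b \<in> F \<and> a \<noteq> b}). 0 < a"
    using assms(2) by (auto intro: mdist_pos_less)
qed simp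

lemma delta_le:
  assumes "finite F" "a \<in> F" "b \<in> F" "a \<noteq> b" shows "delta F \<le> d a b"
  unfolding delta_def
proof (rule Min_le)
  show "finite (insert 1 ((\<lambda>(a,b). d a b) ` {(a,b). a \<in> F \<and> b \<in> F \<and> a \<noteq> b}))"
    using assms(1) by (rule delta_fin)
  have "(a,b) \<in> {(a,b). a \<in> F \<and> b \<in> F \<and> a \<noteq> b}" using assms by simp
  then show "d a b \<in> insert 1 ((\<lambda>(a,b). d a b) ` {(a,b). a \<in> F \<and> b \<in> F \<and> a \<noteq> b})"
    by (metis (no_types, lifting) case_prod_conv image_eqI insertCI)
qed

definition eps :: "nat \<Rightarrow> 'a set \<Rightarrow> real" where
  "eps n F = min ((1/2)^n) (delta F / 3)"

lemma eps_pos: "finite F \<Longrightarrow> F \<subseteq> M \<Longrightarrow> 0 < eps n F"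
  using delta_pos by (simp add: eps_def)

definition Wn :: "'a set \<Rightarrow> real \<Rightarrow> 'a set" where
  "Wn F e = {w \<in> M. \<forall>g\<in>F. g \<otimes> w \<in> mball g e}"

lemma cont_lmult:
  assumes g: "g \<in> M" shows "continuous_map mtopology mtopology (\<lambda>w. g \<otimes> w)"
proof -
  have "continuous_map mtopology (prod_topology mtopology mtopology) (\<lambda>w. (g, w))"
    using g by (intro continuous_map_pairedI) auto
  then have "continuous_map mtopology mtopology ((\<lambda>(x,y). x \<otimes> y) \<circ> (\<lambda>w. (g, w)))"
    using cmult by (rule continuous_map_compose)
  then show ?thesis by (simp add: o_def)
qed

lemma W_open:
  assumes F: "finite F" "F \<subseteq> M" shows "openin mtopology (Wn F e)"
proof -
  have "Wn F e = (\<Inter>g\<in>F. {w \<in> topspace mtopology. g \<otimes> w \<in> mball g e}) \<inter> topspace mtopology"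
    by (auto simp: Wn_def)
  moreover have "openin mtopology ((\<Inter>g\<in>F. {w \<in> topspace mtopology. g \<otimes> w \<in> mball g e}) \<inter> topspace mtopology)"
  proof (rule openin_INT)
    show "finite F" by (rule F(1))
    fix g assume "g \<in> F"
    then have "g \<in> M" using F(2) by blast
    then show "openin mtopology {w \<in> topspace mtopology. g \<otimes> w \<in> mball g e}"
      using cont_lmult openin_continuous_map_preimage openin_mball by blast
  qed
  ultimately show ?thesis by simp
qed

lemma W_one: "F \<subseteq> M \<Longrightarrow> 0 < e \<Longrightarrow> \<one> \<in> Wn F e"
proof -
  assume "F \<subseteq> M" "0 < e"
  have r: "\<And>g. g \<in> M \<Longrightarrow> g \<otimes> \<one> = g" using MG by simp
  show "\<one> \<in> Wn F e" using r \<open>F \<subseteq> M\<close> \<open>0 < e\<close> by (auto simp: Wn_def)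
qed

definition goodV :: "'a set \<Rightarrow> 'a set \<Rightarrow> nat \<Rightarrow> 'a set \<Rightarrow> bool" where
  "goodV V F n V' \<longleftrightarrow> openin mtopology V' \<and> \<one> \<in> V' \<and> (\<forall>a\<in>V'. \<forall>b\<in>V'. a \<otimes> b \<in> V \<inter> Wn F (eps n F))"

definition goodx :: "'a set \<Rightarrow> 'a \<Rightarrow> bool" where
  "goodx V' x \<longleftrightarrow> x \<in> carrier G \<and> x \<noteq> \<one> \<and> (\<forall>j::nat. x [^] j \<in> V')"

definition pows :: "'a \<Rightarrow> 'a set" where
  "pows x = range (\<lambda>j::nat. x [^] j)"

lemma pows_finite:
  assumes x: "x \<in> carrier G" shows "finite (pows x)"
proof -
  obtain k :: nat where k: "k > 0" "x [^] k = \<one>" using tors x unfolding torsion_group_def by blast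
  have "ord x dvd k" using x k pow_eq_id by blast
  then have o: "ord x > 0" using k by (metis dvd_0_left_iff not_gr0)
  have "pows x \<subseteq> (\<lambda>j. x [^] j) ` {..<ord x}"
  proof
    fix y assume "y \<in> pows x"
    then obtain j :: nat where "y = x [^] j" by (auto simp: pows_def)
    then have "y = x [^] (j mod ord x)" using x pow_mod_ord by simp
    moreover have "j mod ord x < ord x" using o by simp
    ultimately show "y \<in> (\<lambda>j. x [^] j) ` {..<ord x}" by blast
  qed
  then show ?thesis using finite_subset by blast
qed

lemma exists_goodV:
  assumes "openin mtopology V" "\<one> \<in> V" "finite F" "F \<subseteq> M"
  shows "\<exists>V'. goodV V F n V'"
proof -
  have e: "0 < eps n F" using assms(3,4) by (rule eps_pos)
  have "openin mtopology (V \<inter> Wn F (eps n F))"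
    using assms W_open by (simp add: openin_Int)
  moreover have "\<one> \<in> V \<inter> Wn F (eps n F)" using assms(2,4) e W_one by simp
  ultimately show ?thesis unfolding goodV_def using sq_nbhd by blast
qed

lemma exists_goodx:
  assumes "openin mtopology V'" "\<one> \<in> V'" shows "\<exists>x. goodx V' x"
  unfolding goodx_def using nss_elem[OF assms] by blast

definition step :: "nat \<Rightarrow> 'a set \<times> 'a set \<times> 'a \<Rightarrow> 'a set \<times> 'a set \<times> 'a" where
  "step n s = (let F = fst s; V = fst (snd s); V' = (SOME V'. goodV V F n V'); x = (SOME x. goodx V' x)
     in ((\<lambda>(g,y). g \<otimes> y) ` (F \<times> pows x), V', x))"

definition st :: "nat \<Rightarrow> 'a set \<times> 'a set \<times> 'a" where
  "st = rec_nat ({\<one>}, M, \<one>) step"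

definition "Fs n = fst (st n)"
definition "Vs n = fst (snd (st n))"
definition "xs n = snd (snd (st (Suc n)))"

lemma st_Suc: "st (Suc n) = step n (st n)" by (simp add: st_def)

lemma st_facts:
  "finite (Fs n) \<and> Fs n \<subseteq> M \<and> openin mtopology (Vs n) \<and> \<one> \<in> Vs n"
proof (induction n)
  case 0
  show ?case by (simp add: Fs_def Vs_def st_def)
next
  case (Suc n)
  define V' where "V' = (SOME V'. goodV (Vs n) (Fs n) n V')"
  define x where "x = (SOME x. goodx V' x)"
  have gV: "goodV (Vs n) (Fs n) n V'"
    unfolding V'_def using exists_goodV Suc.IH by (meson someI_ex)
  then have gx: "goodx V' x"
    unfolding x_def using exists_goodx by (meson goodV_def someI_ex)
  have FS: "Fs (Suc n) = (\<lambda>(g,y). g \<otimes> y) ` (Fs n \<times> pows x)"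
    and VS: "Vs (Suc n) = V'"
    by (simp_all add: Fs_def Vs_def st_Suc step_def Let_def V'_def x_def)
  have xc: "x \<in> carrier G" using gx goodx_def by blast
  have "finite (Fs (Suc n))" unfolding FS using Suc.IH pows_finite[OF xc] by simp
  moreover have "Fs (Suc n) \<subseteq> M"
  proof
    fix z assume "z \<in> Fs (Suc n)"
    then obtain g j where "g \<in> Fs n" "z = g \<otimes> x [^] (j::nat)" unfolding FS pows_def by auto
    then show "z \<in> M" using Suc.IH xc MG by auto
  qed
  ultimately show ?case using gV VS unfolding goodV_def by simp
qed

lemma step_facts:
  "goodV (Vs n) (Fs n) n (Vs (Suc n))" "goodx (Vs (Suc n)) (xs n)"
  "Fs (Suc n) = (\<lambda>(g,y). g \<otimes> y) ` (Fs n \<times> pows (xs n))"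
proof -
  define V' where "V' = (SOME V'. goodV (Vs n) (Fs n) n V')"
  define x where "x = (SOME x. goodx V' x)"
  have gV: "goodV (Vs n) (Fs n) n V'"
    unfolding V'_def using exists_goodV st_facts by (meson someI_ex)
  then have gx: "goodx V' x"
    unfolding x_def using exists_goodx by (meson goodV_def someI_ex)
  have FS: "Fs (Suc n) = (\<lambda>(g,y). g \<otimes> y) ` (Fs n \<times> pows x)"
    and VS: "Vs (Suc n) = V'" and XS: "xs n = x"
    by (simp_all add: Fs_def Vs_def xs_def st_Suc step_def Let_def V'_def x_def)
  show "goodV (Vs n) (Fs n) n (Vs (Suc n))" using gV VS by simp
  show "goodx (Vs (Suc n)) (xs n)" using gx VS XS by simp
  show "Fs (Suc n) = (\<lambda>(g,y). g \<otimes> y) ` (Fs n \<times> pows (xs n))" using FS XS by simp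
qed

definition e :: "nat \<Rightarrow> real" where "e n = eps n (Fs n)"

lemma Fs_fin: "finite (Fs n)" using st_facts by blast
lemma Fs_M: "Fs n \<subseteq> M" using st_facts by blast
lemma Vs_open: "openin mtopology (Vs n)" using st_facts by blast
lemma Vs_one: "\<one> \<in> Vs n" using st_facts by blast

lemma e_pos: "0 < e n" unfolding e_def by (rule eps_pos[OF Fs_fin Fs_M])
lemma e_le: "e n \<le> (1/2)^n" by (simp add: e_def eps_def)
lemma e_delta: "3 * e n \<le> delta (Fs n)" by (simp add: e_def eps_def)

lemma Vs_M: "Vs n \<subseteq> M" using openin_subset[OF Vs_open] by simp

lemma xs_facts: "xs n \<in> carrier G" "xs n \<noteq> \<one>" "xs n [^] (j::nat) \<in> Vs (Suc n)"
  using step_facts(2)[of n] unfolding goodx_def by auto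

lemma Vs_sq: "a \<in> Vs (Suc n) \<Longrightarrow> b \<in> Vs (Suc n) \<Longrightarrow> a \<otimes> b \<in> Vs n \<and> a \<otimes> b \<in> Wn (Fs n) (e n)"
  using step_facts(1)[of n] unfolding goodV_def e_def by blast

primrec ps :: "(nat \<Rightarrow> nat) \<Rightarrow> nat \<Rightarrow> 'a" where
  "ps a 0 = \<one>"
| "ps a (Suc m) = ps a m \<otimes> xs m [^] a m"

primrec tp :: "(nat \<Rightarrow> nat) \<Rightarrow> nat \<Rightarrow> nat \<Rightarrow> 'a" where
  "tp a n 0 = \<one>"
| "tp a n (Suc j) = xs n [^] a n \<otimes> tp a (Suc n) j"

lemma ps_carrier: "ps a m \<in> carrier G"
  by (induction m) (simp_all add: xs_facts)

lemma ps_M: "ps a m \<in> M" using ps_carrier MG by simp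

lemma tp_carrier: "tp a n j \<in> carrier G"
  by (induction j arbitrary: n) (simp_all add: xs_facts)

lemma ps_F: "ps a m \<in> Fs m"
proof (induction m)
  case 0 then show ?case by (simp add: Fs_def st_def)
next
  case (Suc m)
  have "(ps a m, xs m [^] a m) \<in> Fs m \<times> pows (xs m)" using Suc by (auto simp: pows_def)
  then show ?case unfolding step_facts(3) by force
qed

lemma ps_split: "ps a (n + j) = ps a n \<otimes> tp a n j"
proof (induction j arbitrary: n)
  case 0 then show ?case using ps_carrier by simp
next
  case (Suc j)
  have "ps a (n + Suc j) = ps a (Suc n + j)" by simp
  also have "\<dots> = ps a (Suc n) \<otimes> tp a (Suc n) j" by (rule Suc.IH)
  also have "\<dots> = ps a n \<otimes> tp a n (Suc j)"
    using ps_carrier tp_carrier xs_facts by (simp add: m_assoc)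
  finally show ?case .
qed

lemma tp_V: "tp a n j \<in> Vs n \<and> (0 < j \<longrightarrow> tp a n j \<in> Wn (Fs n) (e n))"
proof (induction j arbitrary: n)
  case 0 then show ?case using st_facts by simp
next
  case (Suc j)
  have "xs n [^] a n \<in> Vs (Suc n)" by (rule xs_facts)
  moreover have "tp a (Suc n) j \<in> Vs (Suc n)" using Suc.IH by blast
  ultimately show ?case using Vs_sq by simp
qed

lemma ps_dist_lt:
  assumes "n < m" shows "d (ps a n) (ps a m) < e n"
proof -
  obtain j where j: "m = n + j" "0 < j" using assms by (metis less_imp_add_positive)
  have "tp a n j \<in> Wn (Fs n) (e n)" using tp_V j by blast
  then have "ps a n \<otimes> tp a n j \<in> mball (ps a n) (e n)" using ps_F unfolding Wn_def by blast
  then show ?thesis using j ps_split by simp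
qed

lemma ps_dist_le:
  assumes "n \<le> m" shows "d (ps a n) (ps a m) \<le> e n"
proof (cases "n = m")
  case True then show ?thesis using e_pos[of n] ps_M by simp
next
  case False then show ?thesis using ps_dist_lt assms by (simp add: less_imp_le)
qed

lemma ps_Cauchy: "MCauchy (ps a)"
  unfolding MCauchy_def
proof (intro conjI allI impI)
  show "range (ps a) \<subseteq> M" using ps_M by blast
  fix \<epsilon> :: real assume "\<epsilon> > 0"
  then obtain N where N: "(1/2::real)^N < \<epsilon>/2" using real_arch_pow_inv[of "\<epsilon>/2" "1/2"] by auto
  show "\<exists>N. \<forall>n n'. N \<le> n \<longrightarrow> N \<le> n' \<longrightarrow> d (ps a n) (ps a n') < \<epsilon>"
  proof (intro exI allI impI)
    fix n n' assume "N \<le> n" "N \<le> n'"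
    then have "d (ps a N) (ps a n) \<le> e N" "d (ps a N) (ps a n') \<le> e N" using ps_dist_le by auto
    moreover have "d (ps a n) (ps a n') \<le> d (ps a n) (ps a N) + d (ps a N) (ps a n')"
      using ps_M triangle by blast
    moreover have "d (ps a n) (ps a N) = d (ps a N) (ps a n)" by (rule commute)
    moreover have "e N \<le> (1/2)^N" by (rule e_le)
    ultimately show "d (ps a n) (ps a n') < \<epsilon>" using N by linarith
  qed
qed

definition limp :: "(nat \<Rightarrow> nat) \<Rightarrow> 'a" where
  "limp a = (SOME l. limitin mtopology (ps a) l sequentially)"

lemma limp_lim: "limitin mtopology (ps a) (limp a) sequentially"
proof -
  have "\<exists>l. limitin mtopology (ps a) l sequentially" using mcompl ps_Cauchy unfolding mcomplete_def by blast
  then show ?thesis unfolding limp_def by (rule someI_ex)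
qed

lemma limp_M: "limp a \<in> M" using limp_lim limitin_metric by blast

lemma limp_dist: "d (ps a n) (limp a) \<le> e n"
proof (rule ccontr)
  assume "\<not> d (ps a n) (limp a) \<le> e n"
  then have eta: "0 < d (ps a n) (limp a) - e n" by simp
  have "eventually (\<lambda>m. ps a m \<in> M \<and> d (ps a m) (limp a) < d (ps a n) (limp a) - e n) sequentially"
    using limp_lim eta unfolding limitin_metric by blast
  then obtain N where N: "\<And>m. m \<ge> N \<Longrightarrow> d (ps a m) (limp a) < d (ps a n) (limp a) - e n"
    unfolding eventually_sequentially by blast
  define m where "m = max N n"
  have "d (ps a n) (limp a) \<le> d (ps a n) (ps a m) + d (ps a m) (limp a)"
    using ps_M limp_M triangle by blast
  moreover have "d (ps a n) (ps a m) \<le> e n" using ps_dist_le by (simp add: m_def)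
  moreover have "d (ps a m) (limp a) < d (ps a n) (limp a) - e n" using N by (simp add: m_def)
  ultimately show False by linarith
qed

lemma ps_local: "(\<And>i. i < m \<Longrightarrow> a i = b i) \<Longrightarrow> ps a m = ps b m"
  by (induction m) auto

definition ks :: "nat \<Rightarrow> nat" where "ks n = ord (xs n)"

lemma ks_ge2: "2 \<le> ks n"
proof -
  obtain k :: nat where k: "k > 0" "xs n [^] k = \<one>" using tors xs_facts(1)[of n] unfolding torsion_group_def by blast
  have "ord (xs n) dvd k" using xs_facts(1) k pow_eq_id by blast
  then have "ord (xs n) \<noteq> 0" using k by (metis dvd_0_left_iff not_gr0)
  moreover have "ord (xs n) \<noteq> 1" using ord_eq_1 xs_facts(1,2) by blast
  ultimately show ?thesis by (simp add: ks_def)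
qed

lemma limp_inj:
  assumes a: "\<And>i. a i < ks i" and b: "\<And>i. b i < ks i" and ab: "a \<noteq> b"
  shows "limp a \<noteq> limp b"
proof
  assume eq: "limp a = limp b"
  obtain i0 where "a i0 \<noteq> b i0" using ab by blast
  define n where "n = (LEAST i. a i \<noteq> b i)"
  have an: "a n \<noteq> b n" unfolding n_def by (rule LeastI) (rule \<open>a i0 \<noteq> b i0\<close>)
  have lt: "\<And>i. i < n \<Longrightarrow> a i = b i" unfolding n_def using not_less_Least by blast
  have P: "ps a n = ps b n" using lt by (rule ps_local)
  have ne: "ps a (Suc n) \<noteq> ps b (Suc n)"
  proof
    assume "ps a (Suc n) = ps b (Suc n)"
    then have "ps a n \<otimes> xs n [^] a n = ps a n \<otimes> xs n [^] b n" using P by simp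
    then have "xs n [^] a n = xs n [^] b n" using ps_carrier xs_facts(1) by (simp add: l_cancel)
    then have "a n = b n" by (rule pow_inj_ord[OF xs_facts(1) a[of n, unfolded ks_def] b[of n, unfolded ks_def]])
    then show False using an by contradiction
  qed
  have "delta (Fs (Suc n)) \<le> d (ps a (Suc n)) (ps b (Suc n))"
    by (rule delta_le[OF Fs_fin ps_F ps_F ne])
  moreover have "3 * e (Suc n) \<le> delta (Fs (Suc n))" by (rule e_delta)
  moreover have "d (ps a (Suc n)) (ps b (Suc n)) \<le> d (ps a (Suc n)) (limp a) + d (limp a) (ps b (Suc n))"
    by (rule triangle[OF ps_M limp_M ps_M])
  moreover have "d (limp a) (ps b (Suc n)) = d (ps b (Suc n)) (limp b)" unfolding eq by (rule commute)
  moreover have "d (ps a (Suc n)) (limp a) \<le> e (Suc n)" "d (ps b (Suc n)) (limp b) \<le> e (Suc n)"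
    by (rule limp_dist)+
  moreover have "0 < e (Suc n)" by (rule e_pos)
  ultimately show False by linarith
qed

lemma ps_mult: "ps (\<lambda>i. (a i + b i) mod ks i) m = ps a m \<otimes> ps b m"
proof (induction m)
  case 0 then show ?case by simp
next
  case (Suc m)
  have x: "xs m \<in> carrier G" by (rule xs_facts)
  have "xs m [^] ((a m + b m) mod ks m) = xs m [^] a m \<otimes> xs m [^] b m"
    using pow_mod_ord[OF x] x by (simp add: ks_def nat_pow_mult)
  then have "ps (\<lambda>i. (a i + b i) mod ks i) (Suc m) = (ps a m \<otimes> ps b m) \<otimes> (xs m [^] a m \<otimes> xs m [^] b m)"
    using Suc.IH by simp
  also have "\<dots> = (ps a m \<otimes> xs m [^] a m) \<otimes> (ps b m \<otimes> xs m [^] b m)"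
    by (rule swap4) (simp_all add: ps_carrier x)
  finally show ?case by simp
qed

lemma limp_mult: "limp (\<lambda>i. (a i + b i) mod ks i) = limp a \<otimes> limp b"
proof -
  have "limitin (prod_topology mtopology mtopology) (\<lambda>m. (ps a m, ps b m)) (limp a, limp b) sequentially"
    unfolding limitin_pairwise using limp_lim by (simp add: o_def)
  then have "limitin mtopology ((\<lambda>(x,y). x \<otimes> y) \<circ> (\<lambda>m. (ps a m, ps b m))) ((\<lambda>(x,y). x \<otimes> y) (limp a, limp b)) sequentially"
    using cmult by (intro continuous_map_limit)
  moreover have "ps (\<lambda>i. (a i + b i) mod ks i) = (\<lambda>m. ps a m \<otimes> ps b m)"
    by (simp add: fun_eq_iff ps_mult)
  ultimately have "limitin mtopology (ps (\<lambda>i. (a i + b i) mod ks i)) (limp a \<otimes> limp b) sequentially"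
    by (simp add: o_def)
  then show ?thesis
    by (rule limitin_Hausdorff_unique[OF limp_lim _ trivial_limit_sequentially Hausdorff_space_mtopology])
qed

lemma construction:
  "\<exists>(H :: nat \<Rightarrow> nat monoid) S.
     (\<forall>n. group (H n) \<and> finite (carrier (H n)) \<and> card (carrier (H n)) > 1) \<and>
     top_iso_to_product G mtopology S UNIV H"
proof (intro exI conjI allI)
  define H where "H = (\<lambda>n. Zm (ks n))"
  let ?P = "product_group UNIV H"
  let ?X = "product_topology (\<lambda>i. discrete_topology (carrier (H i))) UNIV"
  show Hn: "group (H n)" "finite (carrier (H n))" "card (carrier (H n)) > 1" for n
    using ks_ge2[of n] Zm_group[of "ks n"] by (simp_all add: H_def)
  have carP: "carrier ?P = {a. \<forall>i. a i < ks i}" by (auto simp: H_def PiE_iff)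
  have topX: "topspace ?X = carrier ?P" by simp
  have multP: "x \<otimes>\<^bsub>?P\<^esub> y = (\<lambda>i. (x i + y i) mod ks i)" for x y by (simp add: H_def restrict_def)
  have gP: "group ?P" using Hn by simp
  have hom: "limp \<in> hom ?P G"
  proof (rule homI)
    fix x assume "x \<in> carrier ?P" then show "limp x \<in> carrier G" using limp_M MG by simp
  next
    fix x y assume "x \<in> carrier ?P" "y \<in> carrier ?P"
    show "limp (x \<otimes>\<^bsub>?P\<^esub> y) = limp x \<otimes> limp y" unfolding multP by (rule limp_mult)
  qed
  interpret gh: group_hom ?P G limp using gP is_group hom by (simp add: group_hom_def group_hom_axioms_def)
  define S where "S = limp ` carrier ?P"
  have inj: "inj_on limp (carrier ?P)"
  proof (rule inj_onI)
    fix a b assume "a \<in> carrier ?P" "b \<in> carrier ?P" "limp a = limp b"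
    then show "a = b" using limp_inj unfolding carP by blast
  qed
  have cont: "continuous_map ?X mtopology limp"
    unfolding continuous_map_to_metric
  proof (intro ballI allI impI)
    fix a and \<epsilon> :: real assume a: "a \<in> topspace ?X" and \<epsilon>: "0 < \<epsilon>"
    obtain N where N: "(1/2::real)^N < \<epsilon>/2" using real_arch_pow_inv[of "\<epsilon>/2" "1/2"] \<epsilon> by auto
    have aP: "\<And>i. a i < ks i" using a topX carP by auto
    define U where "U = Pi\<^sub>E UNIV (\<lambda>i. if i < N then {a i} else carrier (H i))"
    have "{i \<in> UNIV. (if i < N then {a i} else carrier (H i)) \<noteq> topspace (discrete_topology (carrier (H i)))} \<subseteq> {..<N}"
      by auto
    then have "finite {i \<in> UNIV. (if i < N then {a i} else carrier (H i)) \<noteq> topspace (discrete_topology (carrier (H i)))}"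
      using finite_subset by blast
    moreover have "\<forall>i\<in>UNIV. openin (discrete_topology (carrier (H i))) (if i < N then {a i} else carrier (H i))"
      using aP by (simp add: H_def)
    ultimately have oU: "openin ?X U" unfolding U_def by (simp add: openin_PiE_gen)
    have aU: "a \<in> U" using a by (auto simp: U_def PiE_iff)
    have bU: "\<forall>b\<in>U. limp b \<in> mball (limp a) \<epsilon>"
    proof
      fix b assume b: "b \<in> U"
      have "\<And>i. i < N \<Longrightarrow> b i = a i"
      proof -
        fix i assume i: "i < N"
        have "b i \<in> (if i < N then {a i} else carrier (H i))" using b unfolding U_def by (rule PiE_mem) simp
        then show "b i = a i" using i by simp
      qed
      then have P: "ps b N = ps a N" by (rule ps_local)
      have "d (limp a) (limp b) \<le> d (limp a) (ps a N) + d (ps a N) (limp b)"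
        by (rule triangle[OF limp_M ps_M limp_M])
      moreover have "d (limp a) (ps a N) = d (ps a N) (limp a)" by (rule commute)
      moreover have "d (ps a N) (limp a) \<le> e N" by (rule limp_dist)
      moreover have "d (ps a N) (limp b) \<le> e N" unfolding P[symmetric] by (rule limp_dist)
      moreover have "e N \<le> (1/2)^N" by (rule e_le)
      ultimately have "d (limp a) (limp b) < \<epsilon>" using N by linarith
      then show "limp b \<in> mball (limp a) \<epsilon>" using limp_M by simp
    qed
    show "\<exists>U. openin ?X U \<and> a \<in> U \<and> (\<forall>y\<in>U. limp y \<in> mball (limp a) \<epsilon>)"
      using oU aU bU by blast
  qed
  have SM: "S \<subseteq> M" using limp_M by (auto simp: S_def)
  show "top_iso_to_product G mtopology S UNIV H"
    unfolding top_iso_to_product_def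
  proof (intro conjI exI)
    show "subgroup S G" unfolding S_def by (rule gh.img_is_subgroup)
    show "limp \<in> hom ?P G" by (rule hom)
    show "bij_betw limp (carrier ?P) S" using inj by (simp add: S_def bij_betw_def)
    show "homeomorphic_map ?X (subtopology mtopology S) limp"
    proof (rule continuous_imp_homeomorphic_map)
      show "continuous_map ?X (subtopology mtopology S) limp"
        using cont by (auto simp: continuous_map_in_subtopology S_def)
      show "compact_space ?X"
        using Hn by (simp add: compact_space_product_topology compact_space_discrete_topology)
      show "Hausdorff_space (subtopology mtopology S)"
        by (simp add: Hausdorff_space_subtopology Hausdorff_space_mtopology)
      show "limp ` topspace ?X = topspace (subtopology mtopology S)"
        using SM by (simp add: S_def Int_absorb1)
      show "inj_on limp (topspace ?X)" using inj by simp
    qed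
  qed
qed

end


theorem theorem8p5:
  fixes G :: "('a, 'b) monoid_scheme" and T :: "'a topology"
  assumes "topological_group G T"
    and "comm_group G"
    and "torsion_group G"
    and "infinite (carrier G)"
    and "completely_metrizable_space T"
  shows "(\<not> NSS G T \<longleftrightarrow>
            (\<exists>(H :: nat \<Rightarrow> nat monoid) S.
               (\<forall>n. group (H n) \<and> finite (carrier (H n)) \<and> card (carrier (H n)) > 1) \<and>
               top_iso_to_product G T S UNIV H))
       \<and> (\<not> NSS G T \<longrightarrow>
            (\<exists>K. subgroup K G \<and> infinite K \<and> compactin T K \<and> subtopology T K dim_le 0))"
proof -
  from assms(5) obtain M d where Md: "Metric_space M d" "Metric_space.mcomplete M d"
    and T: "T = Metric_space.mtopology M d"
    unfolding completely_metrizable_space_def by blast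
  have tg: "topological_group G T" by (rule assms(1))
  then have tsp: "topspace T = carrier G"
    and cm: "continuous_map (prod_topology T T) T (\<lambda>(x, y). x \<otimes>\<^bsub>G\<^esub> y)"
    unfolding topological_group_def by blast+
  have MG: "M = carrier G" using tsp T Metric_space.topspace_mtopology[OF Md(1)] by simp
  have cg: "comm_group G" by (rule assms(2))
  have grp: "group G" using cg comm_group.axioms(2) by blast
  have constr: "\<exists>(H :: nat \<Rightarrow> nat monoid) S.
               (\<forall>n. group (H n) \<and> finite (carrier (H n)) \<and> card (carrier (H n)) > 1) \<and>
               top_iso_to_product G T S UNIV H" if nN: "\<not> NSS G T"
  proof -
    have "ctg M d G"
      unfolding ctg_def ctg_axioms_def
      using Md cg MG cm nN assms(3) T by simp
    then show ?thesis using T ctg.construction by metis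
  qed
  have bk: "(\<exists>(H :: nat \<Rightarrow> nat monoid) S.
               (\<forall>n. group (H n) \<and> finite (carrier (H n)) \<and> card (carrier (H n)) > 1) \<and>
               top_iso_to_product G T S UNIV H) \<Longrightarrow> \<not> NSS G T"
  proof -
    assume ex: "\<exists>(H :: nat \<Rightarrow> nat monoid) S.
               (\<forall>n. group (H n) \<and> finite (carrier (H n)) \<and> card (carrier (H n)) > 1) \<and>
               top_iso_to_product G T S UNIV H"
    from ex obtain H :: "nat \<Rightarrow> nat monoid" and S where
      H: "\<forall>n. group (H n) \<and> finite (carrier (H n)) \<and> card (carrier (H n)) > 1"
      and iso: "top_iso_to_product G T S UNIV H" by blast
    show ?thesis using iso_imp_not_NSS[OF grp _ iso] H by blast
  qed
  have part2: "\<exists>K. subgroup K G \<and> infinite K \<and> compactin T K \<and> subtopology T K dim_le 0"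
    if nN: "\<not> NSS G T"
  proof -
    from constr[OF nN] obtain H :: "nat \<Rightarrow> nat monoid" and S where
      H: "\<forall>n. group (H n) \<and> finite (carrier (H n)) \<and> card (carrier (H n)) > 1"
      and iso: "top_iso_to_product G T S UNIV H" by blast
    show ?thesis using iso_imp_K[OF tg _ iso] H by blast
  qed
  show ?thesis using constr bk part2 by blast
qed

end
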